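(* Let $V$ be an $n$-dimensional vector space over a field $K$ and $\mathcal{F}\colon\{0\}=V_0\subset V_1\subset\cdots\subset V_n=V$ a chain of subspaces with $\dim V_i=i$. Let $U\le V$ be a subspace, $v\mapsto\overline v$ the canonical map $V\to\overline V:=V/U$, $P$ the stabilizer of $U$ in $\mathrm{Aut}(V)$, and $\pi\colon P\to\mathrm{Aut}(\overline V)$ the epimorphism $\pi(f)(\overline v)=\overline{f(v)}$. Then $\pi$ maps $\mathrm{stab}_P(\mathcal{F})$ onto $\mathrm{stab}_{\mathrm{Aut}(\overline V)}(\overline{\mathcal{F}})$, where $\overline{\mathcal{F}}$ is the chain $0=\overline V_0\subseteq\overline V_1\subseteq\cdots\subseteq\overline V_n=\overline V$.
   Context: $\mathrm{stab}_H(\mathcal{F})$ denotes the set of elements of $H$ mapping each member of the chain onto itself; $\overline{V}_i$ is the image of $V_i$ in $V/U$. *)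

theory Defs
  imports "HOL.Vector_Spaces"
begin

definition lin_aut :: "('k::field \<Rightarrow> 'v::ab_group_add \<Rightarrow> 'v) \<Rightarrow> ('v \<Rightarrow> 'v) set" where
  "lin_aut s = {f. Vector_Spaces.linear s s f \<and> bij f}"

definition chain_stab :: "('v \<Rightarrow> 'v) set \<Rightarrow> nat \<Rightarrow> (nat \<Rightarrow> 'v set) \<Rightarrow> ('v \<Rightarrow> 'v) set" where
  "chain_stab H n Vs = {f \<in> H. \<forall>i\<le>n. f ` Vs i = Vs i}"

text \<open>The induced map on the quotient: given the canonical projection q : V \<rightarrow> V/U,
  pi(f) is the map with pi(f)(q v) = q (f v).\<close>
definition quot_induced :: "('v \<Rightarrow> 'w) \<Rightarrow> ('v \<Rightarrow> 'v) \<Rightarrow> ('w \<Rightarrow> 'w)" where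
  "quot_induced q f = (\<lambda>w. q (f (inv q w)))"

end

theory Submission
  imports Defs
begin

theorem lemma7p5:
  fixes sV :: "'k::field \<Rightarrow> 'v::ab_group_add \<Rightarrow> 'v"
    and sW :: "'k \<Rightarrow> 'w::ab_group_add \<Rightarrow> 'w"
    and n :: nat
    and Vs :: "nat \<Rightarrow> 'v set"
    and U :: "'v set"
    and q :: "'v \<Rightarrow> 'w"
  assumes vsV: "vector_space sV"
    and vsW: "vector_space sW"
    and fin: "\<exists>B. finite B \<and> module.span sV B = UNIV"
    and dimV: "vector_space.dim sV (UNIV :: 'v set) = n"
    and chain_sub: "\<And>i. i \<le> n \<Longrightarrow> module.subspace sV (Vs i)"
    and chain_dim: "\<And>i. i \<le> n \<Longrightarrow> vector_space.dim sV (Vs i) = i"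
    and chain_mono: "\<And>i. i < n \<Longrightarrow> Vs i \<subset> Vs (Suc i)"
    and chain_0: "Vs 0 = {0}"
    and chain_n: "Vs n = UNIV"
    and U_sub: "module.subspace sV U"
    and q_lin: "Vector_Spaces.linear sV sW q"
    and q_surj: "surj q"
    and q_ker: "{v. q v = 0} = U"
  shows "quot_induced q ` chain_stab {f \<in> lin_aut sV. f ` U = U} n Vs
         = chain_stab (lin_aut sW) n (\<lambda>i. q ` Vs i)"
proof -
  interpret V: vector_space sV by (rule vsV)
  interpret W: vector_space sW by (rule vsW)
  interpret Q: linear sV sW q by (rule q_lin)
  obtain B0 where B0: "finite B0" "V.span B0 = UNIV" using fin by auto
  obtain BV where BV: "BV \<subseteq> B0" "V.independent BV" "B0 \<subseteq> V.span BV"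
    using V.maximal_independent_subset by blast
  have BVf: "finite BV" using BV(1) B0(1) finite_subset by blast
  have BVs: "V.span BV = UNIV"
    using BV(3) B0(2) by (metis V.span_mono V.span_span top.extremum_uniqueI)
  interpret FV: finite_dimensional_vector_space sV BV
    by unfold_locales (use BVf BV(2) BVs in auto)
  interpret VV: vector_space_pair sV sV by unfold_locales
  interpret VW: vector_space_pair sV sW by unfold_locales
  interpret FVV: finite_dimensional_vector_space_pair_1 sV BV sV by unfold_locales
  have qdiff: "q (x - y) = 0 \<longleftrightarrow> q x = q y" for x y by (simp add: Q.diff)
  have mono: "i \<le> j \<Longrightarrow> j \<le> n \<Longrightarrow> Vs i \<subseteq> Vs j" for i j
  proof (induction j)
    case 0 then show ?case by simp
  next
    case (Suc j)
    show ?case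
    proof (cases "i = Suc j")
      case False
      then have "Vs i \<subseteq> Vs j" using Suc by simp
      also have "\<dots> \<subseteq> Vs (Suc j)" using chain_mono[of j] Suc.prems by auto
      finally show ?thesis .
    qed simp
  qed
  have part1: "quot_induced q ` chain_stab {f \<in> lin_aut sV. f ` U = U} n Vs
         \<subseteq> chain_stab (lin_aut sW) n (\<lambda>i. q ` Vs i)"
  proof
    fix h assume "h \<in> quot_induced q ` chain_stab {f \<in> lin_aut sV. f ` U = U} n Vs"
    then obtain f where f: "Vector_Spaces.linear sV sV f" "bij f" "f ` U = U"
      "\<forall>i\<le>n. f ` Vs i = Vs i" and h: "h = quot_induced q f"
      by (auto simp: chain_stab_def lin_aut_def)
    interpret F: linear sV sV f by (rule f(1))
    have key: "h (q v) = q (f v)" for v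
    proof -
      let ?v = "inv q (q v)"
      have "q ?v = q v" using q_surj by (simp add: surj_f_inv_f)
      hence "?v - v \<in> U" using q_ker qdiff by blast
      hence "f (?v - v) \<in> U" using f(3) by blast
      hence "q (f ?v - f v) = 0" using q_ker by (auto simp: F.diff)
      thus ?thesis by (simp add: h quot_induced_def qdiff)
    qed
    have pre: "\<exists>v. w = q v" for w using q_surj by (metis surjD)
    have hlin: "Vector_Spaces.linear sW sW h"
      unfolding linear_iff
    proof (intro conjI allI)
      fix x y
      obtain a b where "x = q a" "y = q b" using pre by metis
      then show "h (x + y) = h x + h y"
        by (metis key Q.add F.add)
    next
      fix c x
      obtain a where "x = q a" using pre by metis
      then show "h (sW c x) = sW c (h x)"
        by (metis key Q.scale F.scale)
    qed (auto intro: vsW)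
    have "inj h"
    proof (rule injI)
      fix x y assume hxy: "h x = h y"
      obtain a b where ab: "x = q a" "y = q b" using pre by metis
      then have "q (f (a - b)) = 0" using hxy key by (simp add: F.diff Q.diff)
      then have "f (a - b) \<in> f ` U" using q_ker f(3) by blast
      then have "a - b \<in> U" using f(2) by (metis bij_is_inj inj_image_mem_iff)
      then show "x = y" using ab q_ker qdiff by blast
    qed
    moreover have "surj h"
    proof -
      have "w \<in> range h" for w
      proof -
        obtain v where v: "w = q v" using pre by metis
        obtain u where "v = f u" using f(2) by (metis bij_pointE)
        then show ?thesis using v key by (metis rangeI)
      qed
      then show ?thesis by blast
    qed
    moreover have "\<forall>i\<le>n. h ` (q ` Vs i) = q ` Vs i"
      using f(4) key by (simp add: image_image) (metis image_image)
    ultimately show "h \<in> chain_stab (lin_aut sW) n (\<lambda>i. q ` Vs i)"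
      using hlin by (auto simp: chain_stab_def lin_aut_def bij_def)
  qed
  have part2: "chain_stab (lin_aut sW) n (\<lambda>i. q ` Vs i) \<subseteq>
     quot_induced q ` chain_stab {f \<in> lin_aut sV. f ` U = U} n Vs"
  proof
    fix g assume "g \<in> chain_stab (lin_aut sW) n (\<lambda>i. q ` Vs i)"
    then have g: "Vector_Spaces.linear sW sW g" "bij g" "\<forall>i\<le>n. g ` q ` Vs i = q ` Vs i"
      by (auto simp: chain_stab_def lin_aut_def)
    interpret G: linear sW sW g by (rule g(1))
    have g0: "g w = 0 \<longleftrightarrow> w = 0" for w
      using g(2) G.zero by (metis bij_is_inj injD)
    define cU where "cU i \<longleftrightarrow> (\<exists>x. x \<in> Vs i \<and> x \<in> U \<and> x \<notin> Vs (i-1))" for i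
    define b where "b i = (if cU i then SOME x. x \<in> Vs i \<and> x \<in> U \<and> x \<notin> Vs (i-1)
        else SOME x. x \<in> Vs i \<and> x \<notin> Vs (i-1))" for i
    have b: "b i \<in> Vs i \<and> b i \<notin> Vs (i-1) \<and> (cU i \<longrightarrow> b i \<in> U)" if "1 \<le> i" "i \<le> n" for i
    proof (cases "cU i")
      case True
      then show ?thesis unfolding b_def using someI_ex[OF True[unfolded cU_def]] by simp
    next
      case False
      have "Vs (i-1) \<subset> Vs (Suc (i-1))" using chain_mono[of "i-1"] that by simp
      then have "\<exists>x. x \<in> Vs i \<and> x \<notin> Vs (i-1)" using that by auto
      then show ?thesis unfolding b_def using someI_ex False by simp
    qed
    define t where "t i = (if cU i then b i else SOME w. w \<in> Vs i \<and> q w = g (q (b i)))" for i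
    have t: "t i \<in> Vs i \<and> q (t i) = g (q (b i))" if "1 \<le> i" "i \<le> n" for i
    proof (cases "cU i")
      case True
      then have "b i \<in> U" using b that by blast
      then have "q (b i) = 0" using q_ker by blast
      then show ?thesis using True b that by (simp add: t_def G.zero q_ker)
    next
      case False
      have "g (q (b i)) \<in> q ` Vs i" using g(3) b that by blast
      then have "\<exists>w. w \<in> Vs i \<and> q w = g (q (b i))" by auto
      then show ?thesis unfolding t_def using someI_ex False by simp
    qed
    have sp: "V.span (b ` {1..k}) = Vs k \<and> V.independent (b ` {1..k}) \<and> card (b ` {1..k}) = k"
      if "k \<le> n" for k
      using that
    proof (induction k)
      case 0
      then show ?case using chain_0 V.independent_empty by simp
    next
      case (Suc k)
      let ?S = "b ` {1..k}"
      have IH: "V.span ?S = Vs k" "V.independent ?S" "card ?S = k" using Suc by auto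
      have bk: "b (Suc k) \<in> Vs (Suc k)" "b (Suc k) \<notin> Vs k" using b[of "Suc k"] Suc.prems by auto
      have eq: "b ` {1..Suc k} = insert (b (Suc k)) ?S"
        by (simp add: atLeastAtMostSuc_conv insert_commute)
      have ind: "V.independent (insert (b (Suc k)) ?S)"
        using V.independent_insertI[of "b (Suc k)" ?S] IH bk by simp
      have nin: "b (Suc k) \<notin> ?S" using bk IH V.span_superset by blast
      have card: "card (insert (b (Suc k)) ?S) = Suc k" using nin IH by simp
      have sub: "V.span (insert (b (Suc k)) ?S) \<subseteq> Vs (Suc k)"
      proof (rule V.span_minimal)
        have "b i \<in> Vs (Suc k)" if "i \<in> {1..k}" for i
          using b[of i] mono[of i "Suc k"] that Suc.prems by auto
        then show "insert (b (Suc k)) ?S \<subseteq> Vs (Suc k)" using bk by auto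
        show "V.subspace (Vs (Suc k))" using chain_sub Suc.prems by simp
      qed
      have "V.span (insert (b (Suc k)) ?S) = Vs (Suc k)"
      proof (rule FV.subspace_dim_equal[OF V.subspace_span chain_sub[OF Suc.prems] sub])
        show "V.dim (Vs (Suc k)) \<le> V.dim (V.span (insert (b (Suc k)) ?S))"
          using chain_dim[OF Suc.prems] V.dim_span_eq_card_independent[OF ind] card by simp
      qed
      then show ?case using eq ind card by simp
    qed
    define BB where "BB = b ` {1..n}"
    have BB: "V.span BB = UNIV" "V.independent BB" "card BB = n"
      using sp[of n] chain_n by (auto simp: BB_def)
    have binj: "inj_on b {1..n}"
      using BB(3) by (simp add: BB_def inj_on_iff_eq_card)
    define f where "f = VV.construct BB (t \<circ> inv_into {1..n} b)"
    have flin: "Vector_Spaces.linear sV sV f" unfolding f_def by (rule VV.linear_construct[OF BB(2)])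
    interpret F: linear sV sV f by (rule flin)
    have fb: "f (b i) = t i" if "i \<in> {1..n}" for i
      unfolding f_def using VV.construct_basis[OF BB(2)] that binj by (simp add: BB_def)
    have comm: "q (f x) = g (q x)" for x
    proof (rule VW.linear_eq_on[of "q \<circ> f" "g \<circ> q", simplified])
      show "Vector_Spaces.linear sV sW (q \<circ> f)" by (rule Vector_Spaces.linear_compose[OF flin q_lin])
      show "Vector_Spaces.linear sV sW (g \<circ> q)" by (rule Vector_Spaces.linear_compose[OF q_lin g(1)])
      show "x \<in> V.span BB" using BB by simp
      fix y assume "y \<in> BB"
      then obtain i where "i \<in> {1..n}" "y = b i" by (auto simp: BB_def)
      then show "q (f y) = g (q y)" using fb t by auto
    qed
    have fV: "f ` Vs k \<subseteq> Vs k" if "k \<le> n" for k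
    proof -
      have "f ` Vs k = V.span (f ` b ` {1..k})" using sp[OF that] F.span_image by metis
      also have "\<dots> \<subseteq> Vs k"
      proof (rule V.span_minimal)
        show "V.subspace (Vs k)" using chain_sub that by simp
        have "f (b i) \<in> Vs k" if "i \<in> {1..k}" for i
          using fb[of i] t[of i] mono[of i k] that \<open>k \<le> n\<close> by auto
        then show "f ` b ` {1..k} \<subseteq> Vs k" by auto
      qed
      finally show ?thesis .
    qed
    have inj0: "x = 0" if "k \<le> n" "x \<in> Vs k" "f x = 0" for k x
      using that
    proof (induction k arbitrary: x)
      case 0
      then show ?case using chain_0 by simp
    next
      case (Suc k)
      let ?S = "b ` {1..k}"
      let ?b = "b (Suc k)"
      have bk: "?b \<in> Vs (Suc k)" "?b \<notin> Vs k" using b[of "Suc k"] Suc.prems by auto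
      have eq: "b ` {1..Suc k} = insert ?b ?S"
        by (simp add: atLeastAtMostSuc_conv insert_commute)
      have "x \<in> V.span (insert ?b ?S)" using sp[OF Suc.prems(1)] eq Suc.prems by simp
      then obtain a where a: "x - sV a ?b \<in> Vs k"
        using V.span_breakdown_eq sp[of k] Suc.prems by auto
      define y where "y = x - sV a ?b"
      have xy: "x = y + sV a ?b" by (simp add: y_def)
      have Vk: "V.subspace (Vs k)" using chain_sub Suc.prems by simp
      show ?case
      proof (cases "cU (Suc k)")
        case True
        have "f ?b = ?b" using fb[of "Suc k"] Suc.prems True by (simp add: t_def)
        then have "f y + sV a ?b = 0" using Suc.prems(3) xy by (simp add: F.add F.scale)
        then have "sV a ?b = - f y" by (simp add: eq_neg_iff_add_eq_0 add.commute)
        moreover have "f y \<in> Vs k" using fV[of k] a y_def Suc.prems by auto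
        ultimately have "sV a ?b \<in> Vs k" using Vk V.subspace_neg by metis
        then have "a = 0"
        proof (rule contrapos_pp)
          assume "a \<noteq> 0"
          then have "sV (inverse a) (sV a ?b) = ?b" by simp
          then show "sV a ?b \<notin> Vs k" using bk Vk V.subspace_scale by metis
        qed
        then have "y = x" using xy by simp
        have "y \<in> Vs k" using a y_def by simp
        have "f y = 0" using \<open>y = x\<close> Suc.prems(3) by simp
        have "k \<le> n" using Suc.prems(1) by simp
        have "y = 0" by (rule Suc.IH) fact+
        then show ?thesis using \<open>y = x\<close> by simp
      next
        case False
        have "g (q x) = 0" using comm[of x] Suc.prems(3) Q.zero by simp
        then have "x \<in> U" using g0 q_ker by blast
        then have "x \<in> Vs k" using False Suc.prems unfolding cU_def by auto
        then show ?thesis using Suc.IH Suc.prems by simp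
      qed
    qed
    have "inj f" using F.inj_iff_eq_0 inj0[of n] chain_n by auto
    moreover have "surj f" using FV.linear_inj_imp_surj[OF flin] \<open>inj f\<close> by simp
    ultimately have fbij: "bij f" by (simp add: bij_def)
    have fU: "f x \<in> U \<longleftrightarrow> x \<in> U" for x
    proof -
      have "f x \<in> U \<longleftrightarrow> q (f x) = 0" using q_ker by blast
      also have "\<dots> \<longleftrightarrow> q x = 0" using comm[of x] g0 by simp
      also have "\<dots> \<longleftrightarrow> x \<in> U" using q_ker by blast
      finally show ?thesis .
    qed
    have fUU: "f ` U = U"
    proof
      show "f ` U \<subseteq> U" using fU by auto
      show "U \<subseteq> f ` U"
      proof
        fix y assume "y \<in> U"
        obtain x where "y = f x" using \<open>surj f\<close> by (metis surjD)
        then show "y \<in> f ` U" using fU \<open>y \<in> U\<close> by auto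
      qed
    qed
    have fVV: "f ` Vs k = Vs k" if "k \<le> n" for k
    proof (rule FV.subspace_dim_equal)
      show "V.subspace (f ` Vs k)" using F.subspace_image chain_sub that by simp
      show "V.subspace (Vs k)" using chain_sub that by simp
      show "f ` Vs k \<subseteq> Vs k" using fV that by simp
      have "V.dim (f ` Vs k) = V.dim (Vs k)"
        using FVV.dim_image_eq[OF flin] \<open>inj f\<close> by (simp add: inj_on_subset)
      then show "V.dim (Vs k) \<le> V.dim (f ` Vs k)" by simp
    qed
    have "quot_induced q f = g"
    proof
      fix w
      show "quot_induced q f w = g w"
        unfolding quot_induced_def using comm q_surj by (simp add: surj_f_inv_f)
    qed
    moreover have "f \<in> chain_stab {f \<in> lin_aut sV. f ` U = U} n Vs"
      using flin fbij fUU fVV by (simp add: chain_stab_def lin_aut_def)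
    ultimately show "g \<in> quot_induced q ` chain_stab {f \<in> lin_aut sV. f ` U = U} n Vs"
      by blast
  qed
  show ?thesis using part1 part2 by blast
qed

end
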